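(* Let $p(x)$ be a prior density and $p(y\mid x)$ a likelihood on $\mathbb{R}^N$ for fixed data $y$, with posterior $p(x\mid y)\propto p(x)p(y\mid x)$. Let $1\le T_r<T_{r+1}$ be temperatures and define tempered densities either by posterior tempering, $\pi_t(x)\propto p(x)^{1/T_t}p(y\mid x)^{1/T_t}$ (with $T_{r+1}<\infty$), or by likelihood tempering, $\pi_t(x)\propto p(x)\,p(y\mid x)^{1/T_t}$ ($t\in\{r,r+1\}$), assumed normalizable. Let $X_r\sim\pi_r$ and $X_{r+1}\sim\pi_{r+1}$ be independent, and define the mean swap probability $$\mathrm P[\mathrm{Swap}_{(r,r+1)}]:=\mathbb E\left[\min\left\{1,\frac{\pi_r(X_{r+1})\pi_{r+1}(X_r)}{\pi_r(X_r)\pi_{r+1}(X_{r+1})}\right\}\right].$$ Then $$\mathrm P[\mathrm{Swap}_{(r,r+1)}]=\begin{cases}2\,\mathrm P[p(X_r\mid y)<p(X_{r+1}\mid y)],&\text{posterior tempering},\\ 2\,\mathrm P[p(y\mid X_r)<p(y\mid X_{r+1})],&\text{likelihood tempering}.\end{cases}$$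
   Formalization: Both identities carry the extra hypothesis that ties are null, namely $\mathrm P[p(X_r\mid y)=p(X_{r+1}\mid y)]=0$ for posterior tempering and $\mathrm P[p(y\mid X_r)=p(y\mid X_{r+1})]=0$ for likelihood tempering. The statement above fails without it. *)

theory Defs
  imports "HOL-Probability.Probability"
begin

datatype tempering = Posterior_Tempering | Likelihood_Tempering

text \<open>Inverse temperature 1/T for a temperature T in [1, infinity]; 1/infinity = 0.\<close>
definition inv_temp :: "ereal \<Rightarrow> real" where
  "inv_temp T = real_of_ereal (inverse T)"

text \<open>Power a^b for a \<ge> 0, with the convention a^0 = 1 (also for a = 0).\<close>
definition tpow :: "real \<Rightarrow> real \<Rightarrow> real" where
  "tpow a b = (if b = 0 then 1 else a powr b)"

definition tempered_unnorm ::
  "tempering \<Rightarrow> ('x \<Rightarrow> real) \<Rightarrow> ('x \<Rightarrow> real) \<Rightarrow> ereal \<Rightarrow> 'x \<Rightarrow> real" where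
  "tempered_unnorm m prior lik T x =
     (case m of
        Posterior_Tempering \<Rightarrow> tpow (prior x) (inv_temp T) * tpow (lik x) (inv_temp T)
      | Likelihood_Tempering \<Rightarrow> prior x * tpow (lik x) (inv_temp T))"

definition tempered_density ::
  "tempering \<Rightarrow> ('x::euclidean_space \<Rightarrow> real) \<Rightarrow> ('x \<Rightarrow> real) \<Rightarrow> ereal \<Rightarrow> 'x \<Rightarrow> real" where
  "tempered_density m prior lik T x =
     tempered_unnorm m prior lik T x / integral\<^sup>L lborel (tempered_unnorm m prior lik T)"

definition posterior_density ::
  "('x::euclidean_space \<Rightarrow> real) \<Rightarrow> ('x \<Rightarrow> real) \<Rightarrow> 'x \<Rightarrow> real" where
  "posterior_density prior lik x =
     prior x * lik x / integral\<^sup>L lborel (\<lambda>z. prior z * lik z)"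

definition swap_ratio :: "('x \<Rightarrow> real) \<Rightarrow> ('x \<Rightarrow> real) \<Rightarrow> 'x \<Rightarrow> 'x \<Rightarrow> real" where
  "swap_ratio pir pir1 a b = pir b * pir1 a / (pir a * pir1 b)"

end

theory Submission
  imports Defs
begin


lemma indep_borel_lborel:
  assumes "prob_space M" "prob_space.indep_var M borel X borel Y"
  shows "prob_space.indep_var M lborel X lborel Y"
proof -
  interpret prob_space M by fact
  show ?thesis using assms(2)
    unfolding indep_var_def indep_vars_def2
    by (simp add: measurable_lborel2 sets_lborel case_bool_if split: bool.split cong: if_cong)
qed

lemma swap_general:
  fixes f h s :: "'a::euclidean_space \<Rightarrow> real" and M :: "'w measure"
  assumes M: "prob_space M"
    and Xr: "distributed M lborel Xr (\<lambda>x. ennreal (f x))"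
    and Xr1: "distributed M lborel Xr1 (\<lambda>x. ennreal (h x))"
    and indep: "prob_space.indep_var M lborel Xr lborel Xr1"
    and fnn: "\<And>x. f x \<ge> 0" and hnn: "\<And>x. h x \<ge> 0"
    and fm[measurable]: "f \<in> borel_measurable borel"
    and hm[measurable]: "h \<in> borel_measurable borel"
    and sm[measurable]: "s \<in> borel_measurable borel"
    and ties: "measure M {\<omega> \<in> space M. s (Xr \<omega>) = s (Xr1 \<omega>)} = 0"
    and pw: "\<And>u v. f u * h v * min 1 (swap_ratio f h u v) =
        f u * h v * (if s u < s v then 1 else 0) + f u * h v * (if s u = s v then 1 else 0)
        + f v * h u * (if s v < s u then 1 else 0)"
  shows "prob_space.expectation M (\<lambda>\<omega>. min 1 (swap_ratio f h (Xr \<omega>) (Xr1 \<omega>)))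
     = 2 * measure M {\<omega> \<in> space M. s (Xr \<omega>) < s (Xr1 \<omega>)}"
proof -
  interpret prob_space M by fact
  have Xrm[measurable]: "Xr \<in> measurable M borel"
    using distributed_measurable[OF Xr] by simp
  have Xr1m[measurable]: "Xr1 \<in> measurable M borel"
    using distributed_measurable[OF Xr1] by simp
  let ?N = "lborel \<Otimes>\<^sub>M lborel :: ('a \<times> 'a) measure"
  define F where "F = (\<lambda>z::'a\<times>'a. f (fst z) * h (snd z))"
  have Fnn: "\<And>z. F z \<ge> 0" unfolding F_def using fnn hnn by simp
  have J0: "distributed M ?N (\<lambda>x. (Xr x, Xr1 x)) (\<lambda>(x, y). ennreal (f x) * ennreal (h y))"
    by (rule distributed_joint_indep[OF lborel.sigma_finite_measure_axioms lborel.sigma_finite_measure_axioms Xr Xr1 indep])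
  have "(\<lambda>(x, y). ennreal (f x) * ennreal (h y)) = (\<lambda>z. ennreal (F z))"
    by (auto simp: F_def ennreal_mult fnn hnn)
  with J0 have J: "distributed M ?N (\<lambda>x. (Xr x, Xr1 x)) (\<lambda>z. ennreal (F z))" by simp
  have key: "\<And>g. g \<in> borel_measurable ?N \<Longrightarrow> (\<And>z. \<bar>g z\<bar> \<le> 1) \<Longrightarrow>
      integrable ?N (\<lambda>z. F z * g z) \<and> (\<integral>z. F z * g z \<partial>?N) = (\<integral>\<omega>. g (Xr \<omega>, Xr1 \<omega>) \<partial>M)"
  proof -
    fix g :: "'a \<times> 'a \<Rightarrow> real" assume gm: "g \<in> borel_measurable ?N" and gb: "\<And>z. \<bar>g z\<bar> \<le> 1"
    have gm': "(\<lambda>\<omega>. g (Xr \<omega>, Xr1 \<omega>)) \<in> borel_measurable M"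
      using gm distributed_measurable[OF J] by (rule measurable_compose[rotated])
    have "integrable M (\<lambda>\<omega>. g (Xr \<omega>, Xr1 \<omega>))"
      by (rule integrable_const_bound[where B=1]) (use gb gm' in auto)
    then show "integrable ?N (\<lambda>z. F z * g z) \<and> (\<integral>z. F z * g z \<partial>?N) = (\<integral>\<omega>. g (Xr \<omega>, Xr1 \<omega>) \<partial>M)"
      using distributed_integrable[OF J gm] distributed_integral[OF J gm] Fnn by auto
  qed
  have prob: "\<And>P. {z. P z} \<in> sets ?N \<Longrightarrow>
      (\<integral>\<omega>. (if P (Xr \<omega>, Xr1 \<omega>) then 1 else 0) \<partial>M) = measure M {\<omega> \<in> space M. P (Xr \<omega>, Xr1 \<omega>)}"
  proof -
    fix P :: "'a \<times> 'a \<Rightarrow> bool" assume PN: "{z. P z} \<in> sets ?N"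
    have "(\<lambda>\<omega>. (Xr \<omega>, Xr1 \<omega>)) -` {z. P z} \<inter> space M \<in> sets M"
      using measurable_sets[OF distributed_measurable[OF J] PN] .
    moreover have "(\<lambda>\<omega>. (Xr \<omega>, Xr1 \<omega>)) -` {z. P z} \<inter> space M = {\<omega> \<in> space M. P (Xr \<omega>, Xr1 \<omega>)}"
      by auto
    ultimately have A: "{\<omega> \<in> space M. P (Xr \<omega>, Xr1 \<omega>)} \<in> sets M" by simp
    have "(\<integral>\<omega>. (if P (Xr \<omega>, Xr1 \<omega>) then 1 else 0) \<partial>M)
        = (\<integral>\<omega>. indicator {\<omega> \<in> space M. P (Xr \<omega>, Xr1 \<omega>)} \<omega> \<partial>M)"
      by (rule Bochner_Integration.integral_cong) (auto simp: indicator_def)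
    also have "\<dots> = measure M {\<omega> \<in> space M. P (Xr \<omega>, Xr1 \<omega>)}"
      by (simp add: Int_absorb2 sets.sets_into_space[OF A])
    finally show "(\<integral>\<omega>. (if P (Xr \<omega>, Xr1 \<omega>) then 1 else 0) \<partial>M) = measure M {\<omega> \<in> space M. P (Xr \<omega>, Xr1 \<omega>)}" .
  qed
  define g1 where "g1 = (\<lambda>z::'a\<times>'a. min 1 (swap_ratio f h (fst z) (snd z)))"
  define gl where "gl = (\<lambda>z::'a\<times>'a. if s (fst z) < s (snd z) then 1 else (0::real))"
  define ge where "ge = (\<lambda>z::'a\<times>'a. if s (fst z) = s (snd z) then 1 else (0::real))"
  define G where "G = (\<lambda>z. F z * gl z)"
  have g1m[measurable]: "g1 \<in> borel_measurable ?N" unfolding g1_def swap_ratio_def by measurable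
  have glm[measurable]: "gl \<in> borel_measurable ?N" unfolding gl_def by measurable
  have gem[measurable]: "ge \<in> borel_measurable ?N" unfolding ge_def by measurable
  have Fm[measurable]: "F \<in> borel_measurable ?N" unfolding F_def by measurable
  have Gm[measurable]: "G \<in> borel_measurable ?N" unfolding G_def by measurable
  have g1b: "\<And>z. \<bar>g1 z\<bar> \<le> 1" unfolding g1_def swap_ratio_def using fnn hnn
    by (auto simp: min_def)
  note k1 = key[OF g1m g1b]
  have glb: "\<And>z. \<bar>gl z\<bar> \<le> 1" unfolding gl_def by auto
  have geb: "\<And>z. \<bar>ge z\<bar> \<le> 1" unfolding ge_def by auto
  note k2 = key[OF glm glb] and k3 = key[OF gem geb]
  have Gi: "integrable ?N G" using k2 unfolding G_def by simp
  have Gsw: "(\<lambda>z. G (snd z, fst z)) = (\<lambda>(x,y). G (y,x))" by (auto simp: case_prod_beta)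
  have Gsi: "integrable ?N (\<lambda>z. G (snd z, fst z))"
    unfolding Gsw by (rule lborel_pair.integrable_product_swap[OF Gi])
  have Gsint: "(\<integral>z. G (snd z, fst z) \<partial>?N) = (\<integral>z. G z \<partial>?N)"
    unfolding Gsw by (rule lborel_pair.integral_product_swap[OF Gm])
  have S1: "{z. s (fst z) < s (snd z)} \<in> sets ?N"
  proof -
    have "{z \<in> space ?N. s (fst z) < s (snd z)} \<in> sets ?N" by measurable
    then show ?thesis by (simp add: space_pair_measure)
  qed
  have S2: "{z. s (fst z) = s (snd z)} \<in> sets ?N"
  proof -
    have "{z \<in> space ?N. s (fst z) = s (snd z)} \<in> sets ?N" by measurable
    then show ?thesis by (simp add: space_pair_measure)
  qed
  have pw': "\<And>z. F z * g1 z = (F z * gl z + F z * ge z) + G (snd z, fst z)"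
    unfolding F_def g1_def gl_def ge_def G_def using pw by (auto simp: case_prod_beta)
  have "prob_space.expectation M (\<lambda>\<omega>. min 1 (swap_ratio f h (Xr \<omega>) (Xr1 \<omega>)))
      = (\<integral>\<omega>. g1 (Xr \<omega>, Xr1 \<omega>) \<partial>M)" by (simp add: g1_def)
  also have "\<dots> = (\<integral>z. F z * g1 z \<partial>?N)" using k1 by simp
  also have "\<dots> = (\<integral>z. (F z * gl z + F z * ge z) + G (snd z, fst z) \<partial>?N)" by (simp only: pw')
  also have "\<dots> = (\<integral>z. F z * gl z \<partial>?N) + (\<integral>z. F z * ge z \<partial>?N) + (\<integral>z. G (snd z, fst z) \<partial>?N)"
    using k2 k3 Gsi by (simp add: Bochner_Integration.integral_add)
  also have "\<dots> = 2 * (\<integral>z. F z * gl z \<partial>?N) + (\<integral>z. F z * ge z \<partial>?N)"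
    unfolding Gsint by (simp add: G_def)
  also have "(\<integral>z. F z * gl z \<partial>?N) = measure M {\<omega> \<in> space M. s (Xr \<omega>) < s (Xr1 \<omega>)}"
    using k2 prob[of "\<lambda>z. s (fst z) < s (snd z)", OF S1] by (simp add: gl_def)
  also have "(\<integral>z. F z * ge z \<partial>?N) = 0"
    using k3 prob[of "\<lambda>z. s (fst z) = s (snd z)", OF S2] ties by (simp add: ge_def)
  finally show ?thesis by simp
qed


lemma inv_temp_facts:
  assumes "1 \<le> Tr" "Tr < Tr1"
  shows "0 \<le> inv_temp Tr1" "inv_temp Tr1 < inv_temp Tr" "0 < inv_temp Tr"
    "Tr1 < \<infinity> \<Longrightarrow> 0 < inv_temp Tr1"
  using assms by (cases Tr; cases Tr1; auto simp: inv_temp_def divide_less_cancel frac_less2)+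

lemma powr_cmp:
  fixes x y a b :: real
  assumes "0 \<le> b" "b < a" "0 < x" "0 < y"
  shows "y powr a * x powr b \<le> x powr a * y powr b \<longleftrightarrow> y \<le> x"
proof -
  have ya: "y powr a = y powr (a - b) * y powr b" and xa: "x powr a = x powr (a - b) * x powr b"
    by (simp_all add: powr_add[symmetric])
  have pos: "0 < y powr b * x powr b" using assms by simp
  have "y powr a * x powr b \<le> x powr a * y powr b \<longleftrightarrow>
        y powr (a - b) * (y powr b * x powr b) \<le> x powr (a - b) * (y powr b * x powr b)"
    unfolding ya xa by (simp add: ac_simps)
  also have "\<dots> \<longleftrightarrow> y powr (a - b) \<le> x powr (a - b)"
    using pos by (simp add: mult_le_cancel_right_pos)
  also have "\<dots> \<longleftrightarrow> y \<le> x"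
  proof
    assume "y powr (a - b) \<le> x powr (a - b)"
    then show "y \<le> x" using assms powr_less_mono2[of "a-b" x y] by force
  next
    assume "y \<le> x" then show "y powr (a - b) \<le> x powr (a - b)"
      using assms by (intro powr_mono2) auto
  qed
  finally show ?thesis .
qed

lemma pw_gen:
  fixes f h s :: "'a \<Rightarrow> real"
  assumes fnn: "\<And>x. f x \<ge> 0" and hnn: "\<And>x. h x \<ge> 0"
    and C1: "\<And>u v. f u > 0 \<Longrightarrow> h v > 0 \<Longrightarrow> (f v * h u \<le> f u * h v \<longleftrightarrow> s v \<le> s u)
                 \<and> (f u * h v \<le> f v * h u \<longleftrightarrow> s u \<le> s v)"
    and C2: "\<And>u v. s v < s u \<Longrightarrow> f u * h v = 0 \<Longrightarrow> f v * h u = 0"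
  shows "f u * h v * min 1 (swap_ratio f h u v) =
        f u * h v * (if s u < s v then 1 else 0) + f u * h v * (if s u = s v then 1 else 0)
        + f v * h u * (if s v < s u then 1 else 0)"
proof (cases "f u * h v = 0")
  case True
  then show ?thesis using C2[of v u] by (cases "s v < s u") auto
next
  case False
  then have fu: "f u > 0" and hv: "h v > 0" using fnn[of u] hnn[of v] by (auto simp: less_le)
  let ?P = "f u * h v" and ?Q = "f v * h u"
  have P: "?P > 0" using fu hv by simp
  have Q: "?Q \<ge> 0" using fnn hnn by simp
  have r: "swap_ratio f h u v = ?Q / ?P" by (simp add: swap_ratio_def)
  note c = C1[OF fu hv]
  consider "s u < s v" | "s u = s v" | "s v < s u" by linarith
  then show ?thesis
  proof cases
    case 1
    then have "?P \<le> ?Q" using c by auto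
    then have "min 1 (?Q / ?P) = 1" using P by (simp add: min_def le_divide_eq)
    then show ?thesis using 1 r by simp
  next
    case 2
    then have "?P = ?Q" using c by (metis order_antisym order_refl)
    then show ?thesis using 2 r P by simp
  next
    case 3
    then have "?Q \<le> ?P" using c by auto
    then have "?Q / ?P \<le> 1" using P by (simp add: divide_le_eq_1)
    then have "min 1 (?Q / ?P) = ?Q / ?P" by (simp add: min_absorb2)
    moreover have Pne: "?P \<noteq> 0" using P by linarith
    then have "?P * (?Q / ?P) = ?Q" by (simp only: times_divide_eq_right nonzero_mult_div_cancel_left[OF Pne])
    ultimately show ?thesis using 3 r by simp
  qed
qed

lemma pw_scaled:
  fixes A B s :: "'a \<Rightarrow> real" and Za Zb :: real
  assumes Za: "Za > 0" and Zb: "Zb > 0"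
    and Ann: "\<And>x. A x \<ge> 0" and Bnn: "\<And>x. B x \<ge> 0"
    and C1: "\<And>u v. A u > 0 \<Longrightarrow> B v > 0 \<Longrightarrow> (A v * B u \<le> A u * B v \<longleftrightarrow> s v \<le> s u)
                 \<and> (A u * B v \<le> A v * B u \<longleftrightarrow> s u \<le> s v)"
    and C2: "\<And>u v. s v < s u \<Longrightarrow> A u * B v = 0 \<Longrightarrow> A v * B u = 0"
  shows "(\<lambda>x. A x / Za) u * (\<lambda>x. B x / Zb) v * min 1 (swap_ratio (\<lambda>x. A x / Za) (\<lambda>x. B x / Zb) u v) =
        (\<lambda>x. A x / Za) u * (\<lambda>x. B x / Zb) v * (if s u < s v then 1 else 0)
        + (\<lambda>x. A x / Za) u * (\<lambda>x. B x / Zb) v * (if s u = s v then 1 else 0)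
        + (\<lambda>x. A x / Za) v * (\<lambda>x. B x / Zb) u * (if s v < s u then 1 else 0)"
proof (rule pw_gen)
  have e: "\<And>u v. (A v / Za) * (B u / Zb) = (A v * B u) / (Za * Zb)" by simp
  have ZZ: "Za * Zb > 0" using Za Zb by simp
  show "\<And>x. (\<lambda>x. A x / Za) x \<ge> 0" using Ann Za by simp
  show "\<And>x. (\<lambda>x. B x / Zb) x \<ge> 0" using Bnn Zb by simp
  show "\<And>u v. (\<lambda>x. A x / Za) u > 0 \<Longrightarrow> (\<lambda>x. B x / Zb) v > 0 \<Longrightarrow>
      ((\<lambda>x. A x / Za) v * (\<lambda>x. B x / Zb) u \<le> (\<lambda>x. A x / Za) u * (\<lambda>x. B x / Zb) v \<longleftrightarrow> s v \<le> s u)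
      \<and> ((\<lambda>x. A x / Za) u * (\<lambda>x. B x / Zb) v \<le> (\<lambda>x. A x / Za) v * (\<lambda>x. B x / Zb) u \<longleftrightarrow> s u \<le> s v)"
  proof -
    fix u v assume "(\<lambda>x. A x / Za) u > 0" "(\<lambda>x. B x / Zb) v > 0"
    then have "A u > 0" "B v > 0" using Za Zb by (simp_all add: zero_less_divide_iff)
    then show "?thesis u v" using C1[of u v] ZZ by (simp only: e divide_le_cancel) simp
  qed
  show "\<And>u v. s v < s u \<Longrightarrow> (\<lambda>x. A x / Za) u * (\<lambda>x. B x / Zb) v = 0 \<Longrightarrow>
      (\<lambda>x. A x / Za) v * (\<lambda>x. B x / Zb) u = 0"
    using C2 Za Zb by simp
qed

theorem proposition5:
  fixes prior :: "real ^ 'n \<Rightarrow> real"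
    and lik :: "'y \<Rightarrow> real ^ 'n \<Rightarrow> real"
    and y :: 'y
    and Tr Tr1 :: ereal
    and mode :: tempering
    and M :: "'w measure"
    and Xr Xr1 :: "'w \<Rightarrow> real ^ 'n"
  assumes prior_nonneg: "\<And>x. prior x \<ge> 0"
    and prior_meas: "prior \<in> borel_measurable lborel"
    and prior_integrable: "integrable lborel prior"
    and prior_normalized: "integral\<^sup>L lborel prior = 1"
    and lik_nonneg: "\<And>x. lik y x \<ge> 0"
    and lik_meas: "lik y \<in> borel_measurable lborel"
    and post_integrable: "integrable lborel (\<lambda>x. prior x * lik y x)"
    and post_pos: "integral\<^sup>L lborel (\<lambda>x. prior x * lik y x) > 0"
    and temps: "1 \<le> Tr" "Tr < Tr1"
    and post_finite: "mode = Posterior_Tempering \<Longrightarrow> Tr1 < \<infinity>"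
    and normalizable: "\<And>T. T \<in> {Tr, Tr1} \<Longrightarrow>
            integrable lborel (tempered_unnorm mode prior (lik y) T)
          \<and> integral\<^sup>L lborel (tempered_unnorm mode prior (lik y) T) > 0"
    and M: "prob_space M"
    and Xr_distr: "distributed M lborel Xr
                     (\<lambda>x. ennreal (tempered_density mode prior (lik y) Tr x))"
    and Xr1_distr: "distributed M lborel Xr1
                     (\<lambda>x. ennreal (tempered_density mode prior (lik y) Tr1 x))"
    and indep: "prob_space.indep_var M borel Xr borel Xr1"
    and no_ties: "measure M {\<omega> \<in> space M.
        (case mode of
           Posterior_Tempering \<Rightarrow>
             posterior_density prior (lik y) (Xr \<omega>) = posterior_density prior (lik y) (Xr1 \<omega>)
         | Likelihood_Tempering \<Rightarrow> lik y (Xr \<omega>) = lik y (Xr1 \<omega>))} = 0"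
  shows "prob_space.expectation M
           (\<lambda>\<omega>. min 1 (swap_ratio (tempered_density mode prior (lik y) Tr)
                                   (tempered_density mode prior (lik y) Tr1)
                                   (Xr \<omega>) (Xr1 \<omega>)))
       = (case mode of
            Posterior_Tempering \<Rightarrow>
              2 * measure M {\<omega> \<in> space M.
                    posterior_density prior (lik y) (Xr \<omega>) < posterior_density prior (lik y) (Xr1 \<omega>)}
          | Likelihood_Tempering \<Rightarrow>
              2 * measure M {\<omega> \<in> space M. lik y (Xr \<omega>) < lik y (Xr1 \<omega>)})"
proof -
  interpret prob_space M by (rule M)
  define a where "a = inv_temp Tr"
  define b where "b = inv_temp Tr1"
  have b0: "0 \<le> b" and ba: "b < a" and a0: "0 < a"
    using inv_temp_facts[OF temps] by (simp_all add: a_def b_def)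
  note nr = normalizable[of Tr, simplified] and nr1 = normalizable[of Tr1, simplified]
  have indep': "indep_var lborel Xr lborel Xr1" by (rule indep_borel_lborel[OF M indep])
  have pm[measurable]: "prior \<in> borel_measurable borel" using prior_meas by simp
  have lm[measurable]: "lik y \<in> borel_measurable borel" using lik_meas by simp
  have dens: "\<And>T. tempered_density mode prior (lik y) T = (\<lambda>x. tempered_unnorm mode prior (lik y) T x
      / integral\<^sup>L lborel (tempered_unnorm mode prior (lik y) T))"
    by (rule ext) (simp add: tempered_density_def)
  have unn_nn: "\<And>T x. tempered_unnorm mode prior (lik y) T x \<ge> 0"
    by (cases mode) (auto simp: tempered_unnorm_def tpow_def prior_nonneg lik_nonneg)
  have unn_m[measurable]: "\<And>T. tempered_unnorm mode prior (lik y) T \<in> borel_measurable borel"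
    unfolding tempered_unnorm_def tpow_def by (cases mode) simp_all
  have dnn: "\<And>T x. T \<in> {Tr, Tr1} \<Longrightarrow> tempered_density mode prior (lik y) T x \<ge> 0"
    unfolding dens using unn_nn normalizable by (simp add: less_imp_le)
  have dm[measurable]: "\<And>T. tempered_density mode prior (lik y) T \<in> borel_measurable borel"
    unfolding dens by measurable
  have fnn: "\<And>x. tempered_density mode prior (lik y) Tr x \<ge> 0" using dnn by simp
  have hnn: "\<And>x. tempered_density mode prior (lik y) Tr1 x \<ge> 0" using dnn by simp
  have aT: "inv_temp Tr = a" and bT: "inv_temp Tr1 = b" by (simp_all add: a_def b_def)
  have Zr: "integral\<^sup>L lborel (tempered_unnorm mode prior (lik y) Tr) > 0" using nr by simp
  have Zr1: "integral\<^sup>L lborel (tempered_unnorm mode prior (lik y) Tr1) > 0" using nr1 by simp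
  show ?thesis
  proof (cases mode)
    case Posterior_Tempering
    define g where "g x = prior x * lik y x" for x
    define Zp where "Zp = integral\<^sup>L lborel (\<lambda>x. prior x * lik y x)"
    have gnn: "\<And>x. g x \<ge> 0" by (simp add: g_def prior_nonneg lik_nonneg)
    have Zp: "Zp > 0" using post_pos by (simp add: Zp_def)
    have bpos: "b > 0" using inv_temp_facts(4)[OF temps post_finite[OF Posterior_Tempering]] by (simp add: b_def)
    have unnP: "\<And>T x. inv_temp T \<noteq> 0 \<Longrightarrow> tempered_unnorm mode prior (lik y) T x = g x powr inv_temp T"
      using Posterior_Tempering by (simp add: tempered_unnorm_def tpow_def g_def powr_mult prior_nonneg lik_nonneg)
    have A: "tempered_unnorm mode prior (lik y) Tr = (\<lambda>x. g x powr a)"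
      using unnP[of Tr] a0 by (auto simp: aT)
    have B: "tempered_unnorm mode prior (lik y) Tr1 = (\<lambda>x. g x powr b)"
      using unnP[of Tr1] bpos by (auto simp: bT)
    have pd: "posterior_density prior (lik y) = (\<lambda>x. g x / Zp)"
      by (rule ext) (simp add: posterior_density_def g_def Zp_def)
    have sm[measurable]: "posterior_density prior (lik y) \<in> borel_measurable borel"
      unfolding pd g_def by measurable
    have ties: "measure M {\<omega> \<in> space M. posterior_density prior (lik y) (Xr \<omega>) = posterior_density prior (lik y) (Xr1 \<omega>)} = 0"
      using no_ties Posterior_Tempering by simp
    have pw: "\<And>u v. tempered_density mode prior (lik y) Tr u * tempered_density mode prior (lik y) Tr1 v
        * min 1 (swap_ratio (tempered_density mode prior (lik y) Tr) (tempered_density mode prior (lik y) Tr1) u v) =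
        tempered_density mode prior (lik y) Tr u * tempered_density mode prior (lik y) Tr1 v
          * (if posterior_density prior (lik y) u < posterior_density prior (lik y) v then 1 else 0)
      + tempered_density mode prior (lik y) Tr u * tempered_density mode prior (lik y) Tr1 v
          * (if posterior_density prior (lik y) u = posterior_density prior (lik y) v then 1 else 0)
      + tempered_density mode prior (lik y) Tr v * tempered_density mode prior (lik y) Tr1 u
          * (if posterior_density prior (lik y) v < posterior_density prior (lik y) u then 1 else 0)"
      unfolding dens
    proof (rule pw_scaled[OF Zr Zr1 unn_nn unn_nn])
      fix u v
      show "tempered_unnorm mode prior (lik y) Tr u > 0 \<Longrightarrow> tempered_unnorm mode prior (lik y) Tr1 v > 0 \<Longrightarrow>
        (tempered_unnorm mode prior (lik y) Tr v * tempered_unnorm mode prior (lik y) Tr1 u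
          \<le> tempered_unnorm mode prior (lik y) Tr u * tempered_unnorm mode prior (lik y) Tr1 v
          \<longleftrightarrow> posterior_density prior (lik y) v \<le> posterior_density prior (lik y) u) \<and>
        (tempered_unnorm mode prior (lik y) Tr u * tempered_unnorm mode prior (lik y) Tr1 v
          \<le> tempered_unnorm mode prior (lik y) Tr v * tempered_unnorm mode prior (lik y) Tr1 u
          \<longleftrightarrow> posterior_density prior (lik y) u \<le> posterior_density prior (lik y) v)"
      proof -
        assume h1: "tempered_unnorm mode prior (lik y) Tr u > 0" and h2: "tempered_unnorm mode prior (lik y) Tr1 v > 0"
        have gu: "g u > 0" using h1 gnn[of u] by (auto simp: A less_le)
        have gv: "g v > 0" using h2 gnn[of v] by (auto simp: B less_le)
        show ?thesis unfolding A B pd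
          using powr_cmp[OF b0 ba gu gv] powr_cmp[OF b0 ba gv gu] Zp
          by (simp add: divide_le_cancel)
      qed
    next
      fix u v
      assume lt: "posterior_density prior (lik y) v < posterior_density prior (lik y) u"
        and z: "tempered_unnorm mode prior (lik y) Tr u * tempered_unnorm mode prior (lik y) Tr1 v = 0"
      have lt': "g v < g u" using lt Zp by (simp add: pd divide_less_cancel)
      have "g u = 0 \<or> g v = 0" using z a0 bpos by (auto simp: A B)
      then have "g v = 0" using lt' gnn[of v] by auto
      then show "tempered_unnorm mode prior (lik y) Tr v * tempered_unnorm mode prior (lik y) Tr1 u = 0"
        by (simp add: A)
    qed
    have "prob_space.expectation M (\<lambda>\<omega>. min 1 (swap_ratio (tempered_density mode prior (lik y) Tr)
                                   (tempered_density mode prior (lik y) Tr1) (Xr \<omega>) (Xr1 \<omega>)))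
      = 2 * measure M {\<omega> \<in> space M. posterior_density prior (lik y) (Xr \<omega>) < posterior_density prior (lik y) (Xr1 \<omega>)}"
      by (rule swap_general[OF M Xr_distr Xr1_distr indep' fnn hnn dm dm sm ties pw])
    then show ?thesis using Posterior_Tempering by simp
  next
    case Likelihood_Tempering
    define L where "L = lik y"
    have Lnn: "\<And>x. L x \<ge> 0" by (simp add: L_def lik_nonneg)
    have A: "tempered_unnorm mode prior (lik y) Tr = (\<lambda>x. prior x * L x powr a)"
      using Likelihood_Tempering a0 by (auto simp: tempered_unnorm_def tpow_def aT L_def)
    have B: "tempered_unnorm mode prior (lik y) Tr1 = (\<lambda>x. prior x * tpow (L x) b)"
      using Likelihood_Tempering by (auto simp: tempered_unnorm_def bT L_def)
    have tp: "\<And>x. L x > 0 \<Longrightarrow> tpow (L x) b = L x powr b" by (simp add: tpow_def)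
    have ties: "measure M {\<omega> \<in> space M. lik y (Xr \<omega>) = lik y (Xr1 \<omega>)} = 0"
      using no_ties Likelihood_Tempering by simp
    have pw: "\<And>u v. tempered_density mode prior (lik y) Tr u * tempered_density mode prior (lik y) Tr1 v
        * min 1 (swap_ratio (tempered_density mode prior (lik y) Tr) (tempered_density mode prior (lik y) Tr1) u v) =
        tempered_density mode prior (lik y) Tr u * tempered_density mode prior (lik y) Tr1 v
          * (if lik y u < lik y v then 1 else 0)
      + tempered_density mode prior (lik y) Tr u * tempered_density mode prior (lik y) Tr1 v
          * (if lik y u = lik y v then 1 else 0)
      + tempered_density mode prior (lik y) Tr v * tempered_density mode prior (lik y) Tr1 u
          * (if lik y v < lik y u then 1 else 0)"
      unfolding dens
    proof (rule pw_scaled[OF Zr Zr1 unn_nn unn_nn])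
      fix u v
      show "tempered_unnorm mode prior (lik y) Tr u > 0 \<Longrightarrow> tempered_unnorm mode prior (lik y) Tr1 v > 0 \<Longrightarrow>
        (tempered_unnorm mode prior (lik y) Tr v * tempered_unnorm mode prior (lik y) Tr1 u
          \<le> tempered_unnorm mode prior (lik y) Tr u * tempered_unnorm mode prior (lik y) Tr1 v
          \<longleftrightarrow> lik y v \<le> lik y u) \<and>
        (tempered_unnorm mode prior (lik y) Tr u * tempered_unnorm mode prior (lik y) Tr1 v
          \<le> tempered_unnorm mode prior (lik y) Tr v * tempered_unnorm mode prior (lik y) Tr1 u
          \<longleftrightarrow> lik y u \<le> lik y v)"
      proof -
        assume h1: "tempered_unnorm mode prior (lik y) Tr u > 0" and h2: "tempered_unnorm mode prior (lik y) Tr1 v > 0"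
        have pu: "prior u > 0" and Lu: "L u > 0"
          using h1 prior_nonneg[of u] Lnn[of u] by (auto simp: A less_le zero_less_mult_iff)
        have tpnn: "tpow (L v) b \<ge> 0" using Lnn[of v] by (simp add: tpow_def)
        have pv: "prior v > 0"
          using h2 prior_nonneg[of v] tpnn by (auto simp: B less_le zero_less_mult_iff)
        have Bu: "prior u * tpow (L u) b > 0" using pu Lu by (simp add: tp)
        have Bv: "prior v * tpow (L v) b > 0" using h2 by (simp add: B)
        show ?thesis
        proof (cases "L v = 0")
          case True
          have "prior u * L u powr a > 0" using pu Lu by simp
          then show ?thesis unfolding A B using True Lu Bv a0 Bu
            by (simp add: L_def[symmetric] mult_pos_pos not_le)
        next
          case False
          then have Lv: "L v > 0" using Lnn[of v] by simp
          have pp: "prior v * prior u > 0" using pu pv by simp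
          have e1: "prior v * L v powr a * (prior u * tpow (L u) b) = (prior v * prior u) * (L v powr a * L u powr b)"
            using tp[OF Lu] by simp
          have e2: "prior u * L u powr a * (prior v * tpow (L v) b) = (prior v * prior u) * (L u powr a * L v powr b)"
            using tp[OF Lv] by simp
          show ?thesis unfolding A B e1 e2
            using powr_cmp[OF b0 ba Lu Lv] powr_cmp[OF b0 ba Lv Lu] pp
            by (simp add: mult_le_cancel_left_pos L_def)
        qed
      qed
    next
      fix u v
      assume lt: "lik y v < lik y u"
        and z: "tempered_unnorm mode prior (lik y) Tr u * tempered_unnorm mode prior (lik y) Tr1 v = 0"
      have lt': "L v < L u" using lt by (simp add: L_def)
      have "prior u = 0 \<or> L u = 0 \<or> prior v = 0 \<or> (b \<noteq> 0 \<and> L v = 0)"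
        using z a0 by (auto simp: A B tpow_def split: if_splits)
      then have "prior u = 0 \<or> prior v = 0 \<or> L v = 0" using lt' Lnn[of v] by auto
      then show "tempered_unnorm mode prior (lik y) Tr v * tempered_unnorm mode prior (lik y) Tr1 u = 0"
        using a0 by (auto simp: A B)
    qed
    have "prob_space.expectation M (\<lambda>\<omega>. min 1 (swap_ratio (tempered_density mode prior (lik y) Tr)
                                   (tempered_density mode prior (lik y) Tr1) (Xr \<omega>) (Xr1 \<omega>)))
      = 2 * measure M {\<omega> \<in> space M. lik y (Xr \<omega>) < lik y (Xr1 \<omega>)}"
      by (rule swap_general[OF M Xr_distr Xr1_distr indep' fnn hnn dm dm lm ties pw])
    then show ?thesis using Likelihood_Tempering by simp
  qed
qed

end
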